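(* Let $\mathbb{X}$ be a measurable space, $\kappa(\mathrm{d}x\mid x')$ a Markov transition kernel on $\mathbb{X}$ with invariant (target) probability distribution $\pi(\mathrm{d}x)$, and $\tau(\mathrm{d}h\mid x)$ a family of probability distributions on $(0,\infty)$ (the hold-time distributions), with cdf $F_{\tau}(h\mid x)$ and survival function $\bar F_{\tau}(h\mid x)=1-F_{\tau}(h\mid x)$. Assume: (1) there is $\epsilon>0$ such that $H>\epsilon$ almost surely under every $\tau(\cdot\mid x)$; (2) $\sup_{x\in\mathbb{X}}\mathbb{E}_{\tau}[H\mid x]<\infty$; (3) $\tau$ is homogeneous in time. Suppose there is a joint kernel $\kappa(\mathrm{d}x_n,\mathrm{d}h_{n-1}\mid x_{n-1})=\kappa(\mathrm{d}x_n\mid h_{n-1},x_{n-1})\,\tau(\mathrm{d}h_{n-1}\mid x_{n-1})$ whose $x_n$-marginal is $\kappa(\mathrm{d}x_n\mid x_{n-1})$, and let $(X_n,H_{n-1})_{n\ge1}$ be generated by this joint kernel from $X_0$ (so $H_{n-1}$ is the real time taken to compute the transition from $X_{n-1}$ to $X_n$). Define arrival times $A_0=0$, $A_n=\sum_{i=0}^{n-1}H_i$ for $n\ge1$, the counting process $N(t)=\sup\{n: A_n\le t\}$, and the continuous-time process $X(t)=X_{N(t)}$, $L(t)=t-A_{N(t)}$ (the lag since the last jump). Then the Markov jump process $(X,L)(t)$ has stationary distribution \[ \alpha(\mathrm{d}x,\mathrm{d}l)=\frac{\bar F_{\tau}(l\mid x)}{\mathbb{E}_{\tau}[H]}\,\pi(\mathrm{d}x)\,\mathrm{d}l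 ,\qquad x\in\mathbb{X},\ l\ge 0, \] where $\mathbb{E}_{\tau}[H]=\int_{\mathbb{X}}\mathbb{E}_{\tau}[H\mid x]\,\pi(\mathrm{d}x)$.
   Context: $\mathbb{E}_{\tau}[H\mid x]$ denotes the mean of $\tau(\cdot\mid x)$. The kernel $\kappa$ need not have a density; nothing is assumed about $\tau$ beyond (1)–(3) (in particular it need not be memoryless). The distribution $\alpha$ is called the anytime distribution. *)

theory Defs
  imports "HOL-Probability.Probability"
begin

text \<open>Hold-time kernel tau :: 'a => real measure; conditional transition kernel
  kc x h = kappa(dx' | h, x).  Time-homogeneity of tau is built in: tau does not depend on n.\<close>

text \<open>fresh_part tau kc n x s A: probability that the process started afresh at state x
  (lag 0, i.e. a jump has just happened) has made exactly n jumps by time s and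
  (X(s), L(s)) lies in A.  The jump at time exactly s counts (N(t) = sup {n. A_n <= t}).\<close>
primrec fresh_part ::
  "('a \<Rightarrow> real measure) \<Rightarrow> ('a \<Rightarrow> real \<Rightarrow> 'a measure) \<Rightarrow> nat \<Rightarrow> 'a \<Rightarrow> real \<Rightarrow> ('a \<times> real) set \<Rightarrow> ennreal"
where
  "fresh_part \<tau> kc 0 x s A = emeasure (\<tau> x) {s<..} * indicator A (x, s)"
| "fresh_part \<tau> kc (Suc n) x s A =
     (\<integral>\<^sup>+ h. indicator {..s} h * (\<integral>\<^sup>+ x'. fresh_part \<tau> kc n x' (s - h) A \<partial>kc x h) \<partial>\<tau> x)"

definition fresh_law ::
  "('a \<Rightarrow> real measure) \<Rightarrow> ('a \<Rightarrow> real \<Rightarrow> 'a measure) \<Rightarrow> 'a \<Rightarrow> real \<Rightarrow> ('a \<times> real) set \<Rightarrow> ennreal"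
where
  "fresh_law \<tau> kc x s A = (\<Sum>n. fresh_part \<tau> kc n x s A)"

text \<open>Transition probability of the Markov jump process (X,L): from state (x,l), the law of
  (X(t),L(t)) in A.  The current hold time H has law tau(.|x) conditioned on H > l; if
  H - l > t no jump has happened yet, otherwise the chain jumps at time H - l to
  x' ~ kc x H and then restarts afresh.\<close>
definition trans_XL ::
  "('a \<Rightarrow> real measure) \<Rightarrow> ('a \<Rightarrow> real \<Rightarrow> 'a measure) \<Rightarrow> real \<Rightarrow> 'a \<Rightarrow> real \<Rightarrow> ('a \<times> real) set \<Rightarrow> ennreal"
where
  "trans_XL \<tau> kc t x l A =
     (\<integral>\<^sup>+ h. indicator {l<..} h *
        (if t < h - l then indicator A (x, l + t)
         else \<integral>\<^sup>+ x'. fresh_law \<tau> kc x' (t - (h - l)) A \<partial>kc x h) \<partial>\<tau> x)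
     / emeasure (\<tau> x) {l<..}"

definition mean_hold :: "('a \<Rightarrow> real measure) \<Rightarrow> 'a \<Rightarrow> real" where
  "mean_hold \<tau> x = (\<integral> h. h \<partial>\<tau> x)"

definition mean_hold_total :: "'a measure \<Rightarrow> ('a \<Rightarrow> real measure) \<Rightarrow> real" where
  "mean_hold_total \<pi> \<tau> = (\<integral> x. mean_hold \<tau> x \<partial>\<pi>)"

definition anytime_dist :: "'a measure \<Rightarrow> ('a \<Rightarrow> real measure) \<Rightarrow> ('a \<times> real) measure" where
  "anytime_dist \<pi> \<tau> = density (\<pi> \<Otimes>\<^sub>M lborel)
     (\<lambda>(x, l). ennreal (indicator {0..} l * measure (\<tau> x) {l<..} / mean_hold_total \<pi> \<tau>))"

end

theory Submission
  imports Defs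
begin

lemma nn_int_kernel_meas[measurable (raw)]:
  assumes "L \<in> N \<rightarrow>\<^sub>M subprob_algebra P"
    and "case_prod f \<in> borel_measurable (N \<Otimes>\<^sub>M P)"
  shows "(\<lambda>x. \<integral>\<^sup>+ y. f x y \<partial>L x) \<in> borel_measurable N"
  using nn_integral_measurable_subprob_algebra2[OF assms(2,1)] by simp

lemma pred_atMost[measurable (raw)]:
  fixes f g :: "'b \<Rightarrow> real"
  shows "f \<in> borel_measurable N \<Longrightarrow> g \<in> borel_measurable N \<Longrightarrow> Measurable.pred N (\<lambda>x. f x \<in> {..g x})"
  by simp measurable
lemma pred_greaterThan[measurable (raw)]:
  fixes f g :: "'b \<Rightarrow> real"
  shows "f \<in> borel_measurable N \<Longrightarrow> g \<in> borel_measurable N \<Longrightarrow> Measurable.pred N (\<lambda>x. f x \<in> {g x<..})"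
  by simp measurable
lemma pred_lessThan[measurable (raw)]:
  fixes f g :: "'b \<Rightarrow> real"
  shows "f \<in> borel_measurable N \<Longrightarrow> g \<in> borel_measurable N \<Longrightarrow> Measurable.pred N (\<lambda>x. f x \<in> {..<g x})"
  by simp measurable
lemma pred_atLeast[measurable (raw)]:
  fixes f g :: "'b \<Rightarrow> real"
  shows "f \<in> borel_measurable N \<Longrightarrow> g \<in> borel_measurable N \<Longrightarrow> Measurable.pred N (\<lambda>x. f x \<in> {g x..})"
  by simp measurable

lemma pred_atLeastLessThan[measurable (raw)]:
  fixes f g k :: "'b \<Rightarrow> real"
  shows "f \<in> borel_measurable N \<Longrightarrow> g \<in> borel_measurable N \<Longrightarrow> k \<in> borel_measurable N \<Longrightarrow> Measurable.pred N (\<lambda>x. f x \<in> {g x..<k x})"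
  by simp measurable

locale setting =
  fixes M :: "'a measure" and \<tau> :: "'a \<Rightarrow> real measure" and kc :: "'a \<Rightarrow> real \<Rightarrow> 'a measure"
    and A :: "('a \<times> real) set"
  assumes kc: "(\<lambda>(x, h). kc x h) \<in> M \<Otimes>\<^sub>M borel \<rightarrow>\<^sub>M prob_algebra M"
    and tau: "\<tau> \<in> M \<rightarrow>\<^sub>M prob_algebra borel"
    and A: "A \<in> sets (M \<Otimes>\<^sub>M borel)"
begin

lemma tau_sub[measurable]: "\<tau> \<in> M \<rightarrow>\<^sub>M subprob_algebra borel"
  using measurable_prob_algebraD[OF tau] .

lemma kc_sub: "(\<lambda>(x, h). kc x h) \<in> M \<Otimes>\<^sub>M borel \<rightarrow>\<^sub>M subprob_algebra M"
  using measurable_prob_algebraD[OF kc] .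

lemma kc_sub'[measurable]:
  assumes [measurable]: "f \<in> N \<rightarrow>\<^sub>M M" "g \<in> borel_measurable N"
  shows "(\<lambda>y. kc (f y) (g y)) \<in> N \<rightarrow>\<^sub>M subprob_algebra M"
  using measurable_compose[OF measurable_Pair[OF assms] kc_sub] by simp

lemma A_meas[measurable]: "A \<in> sets (M \<Otimes>\<^sub>M borel)" by (rule A)

lemma tau_prob: "x \<in> space M \<Longrightarrow> prob_space (\<tau> x)"
  using measurable_space[OF tau] by (auto simp: space_prob_algebra)
lemma sets_tau: "x \<in> space M \<Longrightarrow> sets (\<tau> x) = sets borel"
  using measurable_space[OF tau] by (auto simp: space_prob_algebra)
lemma space_tau: "x \<in> space M \<Longrightarrow> space (\<tau> x) = UNIV"
  using sets_eq_imp_space_eq[OF sets_tau] by simp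
lemma kc_prob: "x \<in> space M \<Longrightarrow> prob_space (kc x h)"
  using measurable_space[OF kc, of "(x,h)"] by (auto simp: space_prob_algebra space_pair_measure)
lemma sets_kc: "x \<in> space M \<Longrightarrow> sets (kc x h) = sets M"
  using measurable_space[OF kc, of "(x,h)"] by (auto simp: space_prob_algebra space_pair_measure)
lemma space_kc: "x \<in> space M \<Longrightarrow> space (kc x h) = space M"
  using sets_eq_imp_space_eq[OF sets_kc] by simp

lemma indA_meas[measurable]: "indicator A \<in> borel_measurable (M \<Otimes>\<^sub>M borel)"
  by (rule borel_measurable_indicator[OF A])

lemma Fb_meas[measurable]:
  assumes [measurable]: "f \<in> N \<rightarrow>\<^sub>M M" "g \<in> borel_measurable N"
  shows "(\<lambda>y. emeasure (\<tau> (f y)) {g y<..}) \<in> borel_measurable N"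
proof -
  have "(\<lambda>y. \<integral>\<^sup>+h. indicator {g y<..} h \<partial>\<tau> (f y)) \<in> borel_measurable N"
    by measurable
  moreover have "y \<in> space N \<Longrightarrow> (\<integral>\<^sup>+h. indicator {g y<..} h \<partial>\<tau> (f y)) = emeasure (\<tau> (f y)) {g y<..}" for y
    using measurable_space[OF assms(1)] by (subst nn_integral_indicator) (auto simp: sets_tau)
  ultimately show ?thesis by (rule measurable_cong[THEN iffD1, rotated])
qed

abbreviation "F n x s \<equiv> fresh_part \<tau> kc n x s A"
abbreviation "Z x s \<equiv> fresh_law \<tau> kc x s A"

lemma F_meas_joint: "(\<lambda>p. F n (fst p) (snd p)) \<in> borel_measurable (M \<Otimes>\<^sub>M borel)"
proof (induction n)
  case 0
  then show ?case by simp measurable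
next
  case (Suc n)
  have [measurable]: "(\<lambda>p. F n (snd p) (snd (fst (fst p)) - snd (fst p))) \<in> borel_measurable (((M \<Otimes>\<^sub>M borel) \<Otimes>\<^sub>M borel) \<Otimes>\<^sub>M M)"
  proof -
    have "(\<lambda>p. (snd p, snd (fst (fst p)) - snd (fst p))) \<in> ((M \<Otimes>\<^sub>M borel) \<Otimes>\<^sub>M borel) \<Otimes>\<^sub>M M \<rightarrow>\<^sub>M M \<Otimes>\<^sub>M (borel :: real measure)"
      by measurable
    from measurable_compose[OF this Suc.IH] show ?thesis by simp
  qed
  show ?case by simp measurable
qed

lemma F_meas[measurable]:
  assumes "f \<in> N \<rightarrow>\<^sub>M M" "g \<in> borel_measurable N"
  shows "(\<lambda>y. F n (f y) (g y)) \<in> borel_measurable N"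
  using measurable_compose[OF measurable_Pair[OF assms] F_meas_joint] by simp

lemma Z_meas[measurable]:
  assumes [measurable]: "f \<in> N \<rightarrow>\<^sub>M M" "g \<in> borel_measurable N"
  shows "(\<lambda>y. Z (f y) (g y)) \<in> borel_measurable N"
  unfolding fresh_law_def by measurable

lemma meas_tau: "x \<in> space M \<Longrightarrow> f \<in> borel_measurable borel \<Longrightarrow> f \<in> borel_measurable (\<tau> x)"
  using measurable_cong_sets[OF sets_tau refl] by blast
lemma meas_kc: "x \<in> space M \<Longrightarrow> f \<in> borel_measurable M \<Longrightarrow> f \<in> borel_measurable (kc x h)"
  using measurable_cong_sets[OF sets_kc refl] by blast

lemma F_sum_le: "x \<in> space M \<Longrightarrow> (\<Sum>n<N. F n x s) \<le> 1"
proof (induction N arbitrary: x s)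
  case 0
  then show ?case by simp
next
  case (Suc N)
  note x[measurable] = Suc.prems
  interpret T: prob_space "\<tau> x" by (rule tau_prob[OF x])
  have "(\<Sum>n<N. F (Suc n) x s) = (\<Sum>n<N. \<integral>\<^sup>+ h. indicator {..s} h * (\<integral>\<^sup>+ x'. F n x' (s - h) \<partial>kc x h) \<partial>\<tau> x)"
    by simp
  also have "\<dots> = (\<integral>\<^sup>+ h. (\<Sum>n<N. indicator {..s} h * (\<integral>\<^sup>+ x'. F n x' (s - h) \<partial>kc x h)) \<partial>\<tau> x)"
    by (rule nn_integral_sum[symmetric]) (intro meas_tau[OF x]; measurable)
  also have "\<dots> = (\<integral>\<^sup>+ h. indicator {..s} h * (\<integral>\<^sup>+ x'. (\<Sum>n<N. F n x' (s - h)) \<partial>kc x h) \<partial>\<tau> x)"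
    by (intro nn_integral_cong, subst nn_integral_sum) (auto simp: sum_distrib_left intro!: meas_kc[OF x])
  also have "\<dots> \<le> (\<integral>\<^sup>+ h. indicator {..s} h * 1 \<partial>\<tau> x)"
  proof (intro nn_integral_mono mult_left_mono)
    fix h assume "h \<in> space (\<tau> x)"
    interpret K: prob_space "kc x h" by (rule kc_prob[OF x])
    have "(\<integral>\<^sup>+ x'. (\<Sum>n<N. F n x' (s - h)) \<partial>kc x h) \<le> (\<integral>\<^sup>+ x'. 1 \<partial>kc x h)"
      by (intro nn_integral_mono Suc.IH) (simp add: space_kc[OF x])
    then show "(\<integral>\<^sup>+ x'. (\<Sum>n<N. F n x' (s - h)) \<partial>kc x h) \<le> 1"
      using K.emeasure_space_1 by simp
  qed simp
  also have "\<dots> = emeasure (\<tau> x) {..s}"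
    using sets_tau[OF x] by simp
  finally have 1: "(\<Sum>n<N. F (Suc n) x s) \<le> emeasure (\<tau> x) {..s}" .
  have 2: "F 0 x s \<le> emeasure (\<tau> x) {s<..}"
    by (simp add: indicator_def)
  have "(\<Sum>n<Suc N. F n x s) = F 0 x s + (\<Sum>n<N. F (Suc n) x s)"
    by (rule sum.lessThan_Suc_shift)
  also have "\<dots> \<le> emeasure (\<tau> x) {s<..} + emeasure (\<tau> x) {..s}"
    using 1 2 by (rule add_mono[rotated])
  also have "\<dots> = emeasure (\<tau> x) ({s<..} \<union> {..s})"
    using sets_tau[OF x] by (intro plus_emeasure) auto
  also have "{s<..} \<union> {..s} = space (\<tau> x)"
    using space_tau[OF x] by auto
  finally show ?case using T.emeasure_space_1 by simp
qed

lemma Z_le_1: "x \<in> space M \<Longrightarrow> Z x s \<le> 1"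
  unfolding fresh_law_def by (intro suminf_le_const summableI F_sum_le)

lemma renewal:
  assumes x[measurable]: "x \<in> space M"
  shows "Z x s = emeasure (\<tau> x) {s<..} * indicator A (x, s) +
     (\<integral>\<^sup>+ h. indicator {..s} h * (\<integral>\<^sup>+ x'. Z x' (s - h) \<partial>kc x h) \<partial>\<tau> x)"
proof -
  have "Z x s = (\<Sum>n. F (n + 1) x s) + (\<Sum>n<1. F n x s)"
    unfolding fresh_law_def by (rule suminf_offset) simp
  also have "(\<Sum>n. F (n + 1) x s) = (\<Sum>n. \<integral>\<^sup>+ h. indicator {..s} h * (\<integral>\<^sup>+ x'. F n x' (s - h) \<partial>kc x h) \<partial>\<tau> x)"
    by simp
  also have "\<dots> = (\<integral>\<^sup>+ h. (\<Sum>n. indicator {..s} h * (\<integral>\<^sup>+ x'. F n x' (s - h) \<partial>kc x h)) \<partial>\<tau> x)"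
    by (rule nn_integral_suminf[symmetric]) (intro meas_tau[OF x]; measurable)
  also have "\<dots> = (\<integral>\<^sup>+ h. indicator {..s} h * (\<integral>\<^sup>+ x'. Z x' (s - h) \<partial>kc x h) \<partial>\<tau> x)"
    unfolding fresh_law_def
    by (intro nn_integral_cong, subst nn_integral_suminf) (auto intro!: meas_kc[OF x])
  finally show ?thesis by (simp add: add.commute)
qed

abbreviation "Kf x h r \<equiv> \<integral>\<^sup>+ x'. Z x' r \<partial>kc x h"

lemma swap_tau:
  assumes x: "x \<in> space M" and f: "case_prod f \<in> borel_measurable (borel \<Otimes>\<^sub>M borel)"
  shows "(\<integral>\<^sup>+ l. \<integral>\<^sup>+ h. f h l \<partial>\<tau> x \<partial>lborel) = (\<integral>\<^sup>+ h. \<integral>\<^sup>+ l. f h l \<partial>lborel \<partial>\<tau> x)"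
proof -
  interpret T: prob_space "\<tau> x" by (rule tau_prob[OF x])
  interpret P: pair_sigma_finite "\<tau> x" lborel
    by (intro pair_sigma_finite.intro T.sigma_finite_measure_axioms lborel.sigma_finite_measure_axioms)
  have "sets (\<tau> x \<Otimes>\<^sub>M lborel) = sets (borel \<Otimes>\<^sub>M borel)"
    by (intro sets_pair_measure_cong sets_tau[OF x]) simp
  then have "case_prod f \<in> borel_measurable (\<tau> x \<Otimes>\<^sub>M lborel)"
    using f measurable_cong_sets by blast
  then show ?thesis by (rule P.Fubini')
qed

lemma swap_kc:
  assumes x: "x \<in> space M" and f: "case_prod f \<in> borel_measurable (M \<Otimes>\<^sub>M borel)"
  shows "(\<integral>\<^sup>+ r. \<integral>\<^sup>+ y. f y r \<partial>kc x h \<partial>lborel) = (\<integral>\<^sup>+ y. \<integral>\<^sup>+ r. f y r \<partial>lborel \<partial>kc x h)"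
proof -
  interpret T: prob_space "kc x h" by (rule kc_prob[OF x])
  interpret P: pair_sigma_finite "kc x h" lborel
    by (intro pair_sigma_finite.intro T.sigma_finite_measure_axioms lborel.sigma_finite_measure_axioms)
  have "sets (kc x h \<Otimes>\<^sub>M lborel) = sets (M \<Otimes>\<^sub>M borel)"
    by (intro sets_pair_measure_cong sets_kc[OF x]) simp
  then have "case_prod f \<in> borel_measurable (kc x h \<Otimes>\<^sub>M lborel)"
    using f measurable_cong_sets by blast
  then show ?thesis by (rule P.Fubini')
qed

lemma Fb_int: "x \<in> space M \<Longrightarrow> emeasure (\<tau> x) {l<..} = (\<integral>\<^sup>+ h. indicator {l<..} h \<partial>\<tau> x)"
  by (subst nn_integral_indicator) (auto simp: sets_tau)

abbreviation "P1 x h t \<equiv> \<integral>\<^sup>+ s. indicator {t..<h} s * indicator A (x, s) \<partial>lborel"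
abbreviation "Qf x h t \<equiv> \<integral>\<^sup>+ r. indicator {0..<t} r * indicator {t-h..} r * Kf x h r \<partial>lborel"
abbreviation "Rs x h t \<equiv> \<integral>\<^sup>+ l. indicator {0..<t} l * indicator {l<..} h * indicator A (x, l) \<partial>lborel"
abbreviation "Bf x h t \<equiv> \<integral>\<^sup>+ u. indicator {0..} u * indicator {..<t-h} u * Kf x h u \<partial>lborel"
abbreviation "C1 x h t \<equiv> \<integral>\<^sup>+ r. indicator {0..<t} r * Kf x h r \<partial>lborel"
abbreviation "Gf x l h t \<equiv> (if t < h - l then indicator A (x, l + t) else Kf x h (t - (h - l)))"

lemma L5h:
  assumes x[measurable]: "x \<in> space M" and t: "t \<ge> 0"
  shows "(\<integral>\<^sup>+ l. indicator {0..} l * indicator {l<..} h * Gf x l h t \<partial>lborel) = P1 x h t + Qf x h t"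
proof -
  have "(\<integral>\<^sup>+ l. indicator {0..} l * indicator {l<..} h * Gf x l h t \<partial>lborel) =
    (\<integral>\<^sup>+ l. indicator {0..} l * indicator {..<h-t} l * indicator A (x, t + l) +
       indicator {h-t..<h} l * indicator {0..} l * Kf x h (t - h + l) \<partial>lborel)"
    using t by (intro nn_integral_cong) (auto simp: indicator_def algebra_simps)
  also have "\<dots> = (\<integral>\<^sup>+ l. indicator {0..} l * indicator {..<h-t} l * indicator A (x, t + l) \<partial>lborel) +
       (\<integral>\<^sup>+ l. indicator {h-t..<h} l * indicator {0..} l * Kf x h (t - h + l) \<partial>lborel)"
    by (rule nn_integral_add) measurable
  also have "(\<integral>\<^sup>+ l. indicator {0..} l * indicator {..<h-t} l * indicator A (x, t + l) \<partial>lborel) = P1 x h t"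
  proof -
    have "P1 x h t = ennreal \<bar>1::real\<bar> * (\<integral>\<^sup>+ l. indicator {t..<h} (t + 1 * l) * indicator A (x, t + 1 * l) \<partial>lborel)"
      by (rule nn_integral_real_affine) measurable
    also have "\<dots> = (\<integral>\<^sup>+ l. indicator {0..} l * indicator {..<h-t} l * indicator A (x, t + l) \<partial>lborel)"
      unfolding abs_one ennreal_1 mult_1 by (intro nn_integral_cong) (auto simp: indicator_def)
    finally show ?thesis ..
  qed
  also have "(\<integral>\<^sup>+ l. indicator {h-t..<h} l * indicator {0..} l * Kf x h (t - h + l) \<partial>lborel) = Qf x h t"
  proof -
    have "Qf x h t = ennreal \<bar>1::real\<bar> * (\<integral>\<^sup>+ l. indicator {0..<t} (t - h + 1 * l) * indicator {t-h..} (t - h + 1 * l) * Kf x h (t - h + 1 * l) \<partial>lborel)"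
      by (rule nn_integral_real_affine) measurable
    also have "\<dots> = (\<integral>\<^sup>+ l. indicator {h-t..<h} l * indicator {0..} l * Kf x h (t - h + l) \<partial>lborel)"
      unfolding abs_one ennreal_1 mult_1 by (intro nn_integral_cong) (auto simp: indicator_def)
    finally show ?thesis ..
  qed
  finally show ?thesis .
qed

lemma L6h:
  assumes x[measurable]: "x \<in> space M" and t: "t \<ge> 0"
  shows "(\<integral>\<^sup>+ l. indicator {0..} l * indicator {l<..} h * indicator A (x, l) \<partial>lborel) = Rs x h t + P1 x h t"
proof -
  have "(\<integral>\<^sup>+ l. indicator {0..} l * indicator {l<..} h * indicator A (x, l) \<partial>lborel) =
     (\<integral>\<^sup>+ l. indicator {0..<t} l * indicator {l<..} h * indicator A (x, l) + indicator {t..<h} l * indicator A (x, l) \<partial>lborel)"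
    using t by (intro nn_integral_cong) (auto simp: indicator_def)
  also have "\<dots> = Rs x h t + P1 x h t"
    by (rule nn_integral_add) measurable
  finally show ?thesis .
qed

lemma L4h:
  assumes x[measurable]: "x \<in> space M" and h: "h > 0"
  shows "Qf x h t + Bf x h t = C1 x h t"
proof -
  have "Qf x h t + Bf x h t = (\<integral>\<^sup>+ r. indicator {0..<t} r * indicator {t-h..} r * Kf x h r + indicator {0..} r * indicator {..<t-h} r * Kf x h r \<partial>lborel)"
    by (rule nn_integral_add[symmetric]) measurable
  also have "\<dots> = C1 x h t"
    using h by (intro nn_integral_cong) (auto simp: indicator_def)
  finally show ?thesis .
qed

lemma B'h:
  assumes x[measurable]: "x \<in> space M" and h: "h > 0"
  shows "(\<integral>\<^sup>+ r. indicator {0..<t} r * indicator {..r} h * Kf x h (r - h) \<partial>lborel) = Bf x h t"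
proof -
  have "(\<integral>\<^sup>+ r. indicator {0..<t} r * indicator {..r} h * Kf x h (r - h) \<partial>lborel) =
     ennreal \<bar>1::real\<bar> * (\<integral>\<^sup>+ u. indicator {0..<t} (h + 1 * u) * indicator {..(h + 1 * u)} h * Kf x h ((h + 1 * u) - h) \<partial>lborel)"
    by (rule nn_integral_real_affine) measurable
  also have "\<dots> = Bf x h t"
    unfolding abs_one ennreal_1 mult_1 using h by (intro nn_integral_cong) (auto simp: indicator_def)
  finally show ?thesis .
qed

lemma L5x:
  assumes x[measurable]: "x \<in> space M" and t: "t \<ge> 0"
  shows "(\<integral>\<^sup>+ l. indicator {0..} l * (\<integral>\<^sup>+ h. indicator {l<..} h * Gf x l h t \<partial>\<tau> x) \<partial>lborel)
     = (\<integral>\<^sup>+ h. P1 x h t + Qf x h t \<partial>\<tau> x)"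
proof -
  have "(\<integral>\<^sup>+ l. indicator {0..} l * (\<integral>\<^sup>+ h. indicator {l<..} h * Gf x l h t \<partial>\<tau> x) \<partial>lborel)
     = (\<integral>\<^sup>+ l. (\<integral>\<^sup>+ h. indicator {0..} l * indicator {l<..} h * Gf x l h t \<partial>\<tau> x) \<partial>lborel)"
    by (intro nn_integral_cong, subst nn_integral_cmult[symmetric])
       (auto simp: mult.assoc intro!: meas_tau[OF x])
  also have "\<dots> = (\<integral>\<^sup>+ h. \<integral>\<^sup>+ l. indicator {0..} l * indicator {l<..} h * Gf x l h t \<partial>lborel \<partial>\<tau> x)"
    by (rule swap_tau[OF x]) measurable
  also have "\<dots> = (\<integral>\<^sup>+ h. P1 x h t + Qf x h t \<partial>\<tau> x)"
    by (intro nn_integral_cong L5h[OF x t])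
  finally show ?thesis .
qed

lemma Rs_x:
  assumes x[measurable]: "x \<in> space M" and [measurable]: "S \<in> sets borel"
  shows "(\<integral>\<^sup>+ l. indicator S l * (emeasure (\<tau> x) {l<..} * indicator A (x, l)) \<partial>lborel)
     = (\<integral>\<^sup>+ h. \<integral>\<^sup>+ l. indicator S l * indicator {l<..} h * indicator A (x, l) \<partial>lborel \<partial>\<tau> x)"
proof -
  have "(\<integral>\<^sup>+ l. indicator S l * (emeasure (\<tau> x) {l<..} * indicator A (x, l)) \<partial>lborel)
     = (\<integral>\<^sup>+ l. (\<integral>\<^sup>+ h. indicator S l * indicator {l<..} h * indicator A (x, l) \<partial>\<tau> x) \<partial>lborel)"
  proof (intro nn_integral_cong)
    fix l
    have "(\<integral>\<^sup>+ h. indicator S l * indicator {l<..} h * indicator A (x, l) \<partial>\<tau> x) =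
       (\<integral>\<^sup>+ h. (indicator S l * indicator A (x, l)) * indicator {l<..} h \<partial>\<tau> x)"
      by (simp add: ac_simps)
    also have "\<dots> = (indicator S l * indicator A (x, l)) * emeasure (\<tau> x) {l<..}"
      by (subst nn_integral_cmult) (auto simp: Fb_int[OF x] intro!: meas_tau[OF x])
    finally show "indicator S l * (emeasure (\<tau> x) {l<..} * indicator A (x, l)) =
       (\<integral>\<^sup>+ h. indicator S l * indicator {l<..} h * indicator A (x, l) \<partial>\<tau> x)"
      by (simp add: ac_simps)
  qed
  also have "\<dots> = (\<integral>\<^sup>+ h. \<integral>\<^sup>+ l. indicator S l * indicator {l<..} h * indicator A (x, l) \<partial>lborel \<partial>\<tau> x)"
    by (rule swap_tau[OF x]) measurable
  finally show ?thesis .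
qed

lemma L6x:
  assumes x[measurable]: "x \<in> space M" and t: "t \<ge> 0"
  shows "(\<integral>\<^sup>+ l. indicator {0..} l * (emeasure (\<tau> x) {l<..} * indicator A (x, l)) \<partial>lborel)
     = (\<integral>\<^sup>+ h. Rs x h t + P1 x h t \<partial>\<tau> x)"
  unfolding Rs_x[OF x, of "{0..}", simplified]
  by (intro nn_integral_cong L6h[OF x t])

lemma L3x:
  assumes x[measurable]: "x \<in> space M" and pos: "AE h in \<tau> x. h > 0"
  shows "(\<integral>\<^sup>+ r. indicator {0..<t} r * Z x r \<partial>lborel)
     = (\<integral>\<^sup>+ h. Rs x h t \<partial>\<tau> x) + (\<integral>\<^sup>+ h. Bf x h t \<partial>\<tau> x)"
proof -
  have "(\<integral>\<^sup>+ r. indicator {0..<t} r * Z x r \<partial>lborel) =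
    (\<integral>\<^sup>+ r. indicator {0..<t} r * (emeasure (\<tau> x) {r<..} * indicator A (x, r)) +
       indicator {0..<t} r * (\<integral>\<^sup>+ h. indicator {..r} h * Kf x h (r - h) \<partial>\<tau> x) \<partial>lborel)"
    by (intro nn_integral_cong, subst renewal[OF x]) (simp add: distrib_left)
  also have "\<dots> = (\<integral>\<^sup>+ r. indicator {0..<t} r * (emeasure (\<tau> x) {r<..} * indicator A (x, r)) \<partial>lborel) +
       (\<integral>\<^sup>+ r. indicator {0..<t} r * (\<integral>\<^sup>+ h. indicator {..r} h * Kf x h (r - h) \<partial>\<tau> x) \<partial>lborel)"
    by (rule nn_integral_add) measurable
  also have "(\<integral>\<^sup>+ r. indicator {0..<t} r * (emeasure (\<tau> x) {r<..} * indicator A (x, r)) \<partial>lborel)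
     = (\<integral>\<^sup>+ h. Rs x h t \<partial>\<tau> x)"
    by (rule Rs_x[OF x]) simp
  also have "(\<integral>\<^sup>+ r. indicator {0..<t} r * (\<integral>\<^sup>+ h. indicator {..r} h * Kf x h (r - h) \<partial>\<tau> x) \<partial>lborel)
     = (\<integral>\<^sup>+ r. (\<integral>\<^sup>+ h. indicator {0..<t} r * indicator {..r} h * Kf x h (r - h) \<partial>\<tau> x) \<partial>lborel)"
    by (intro nn_integral_cong, subst nn_integral_cmult[symmetric])
       (auto simp: mult.assoc intro!: meas_tau[OF x])
  also have "\<dots> = (\<integral>\<^sup>+ h. \<integral>\<^sup>+ r. indicator {0..<t} r * indicator {..r} h * Kf x h (r - h) \<partial>lborel \<partial>\<tau> x)"
    by (rule swap_tau[OF x]) measurable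
  also have "\<dots> = (\<integral>\<^sup>+ h. Bf x h t \<partial>\<tau> x)"
    by (rule nn_integral_cong_AE, rule AE_mp[OF pos], rule AE_I2) (simp add: B'h[OF x])
  finally show ?thesis .
qed

lemma L4x:
  assumes x[measurable]: "x \<in> space M" and pos: "AE h in \<tau> x. h > 0"
  shows "(\<integral>\<^sup>+ h. Qf x h t \<partial>\<tau> x) + (\<integral>\<^sup>+ h. Bf x h t \<partial>\<tau> x) = (\<integral>\<^sup>+ h. C1 x h t \<partial>\<tau> x)"
proof -
  have "(\<integral>\<^sup>+ h. Qf x h t \<partial>\<tau> x) + (\<integral>\<^sup>+ h. Bf x h t \<partial>\<tau> x) = (\<integral>\<^sup>+ h. Qf x h t + Bf x h t \<partial>\<tau> x)"
    by (rule nn_integral_add[symmetric]) (intro meas_tau[OF x]; measurable)+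
  also have "\<dots> = (\<integral>\<^sup>+ h. C1 x h t \<partial>\<tau> x)"
    by (rule nn_integral_cong_AE, rule AE_mp[OF pos], rule AE_I2) (simp add: L4h[OF x])
  finally show ?thesis .
qed

lemma C1_eq:
  assumes x[measurable]: "x \<in> space M"
  shows "C1 x h t = (\<integral>\<^sup>+ y. \<integral>\<^sup>+ r. indicator {0..<t} r * Z y r \<partial>lborel \<partial>kc x h)"
proof -
  have "C1 x h t = (\<integral>\<^sup>+ r. \<integral>\<^sup>+ y. indicator {0..<t} r * Z y r \<partial>kc x h \<partial>lborel)"
    by (intro nn_integral_cong, subst nn_integral_cmult) (auto intro!: meas_kc[OF x])
  also have "\<dots> = (\<integral>\<^sup>+ y. \<integral>\<^sup>+ r. indicator {0..<t} r * Z y r \<partial>lborel \<partial>kc x h)"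
    by (rule swap_kc[OF x]) measurable
  finally show ?thesis .
qed

end

locale stat = setting +
  fixes \<pi> :: "'a measure" and \<kappa> :: "'a \<Rightarrow> 'a measure"
  assumes sets_pi: "sets \<pi> = sets M" and pi_prob: "prob_space \<pi>"
    and kappa: "\<kappa> \<in> M \<rightarrow>\<^sub>M prob_algebra M"
    and kappa_eq: "\<forall>x\<in>space M. \<kappa> x = \<tau> x \<bind> kc x"
    and inv: "\<pi> \<bind> \<kappa> = \<pi>"
    and pos: "\<forall>x\<in>space M. AE h in \<tau> x. h > 0"
begin

lemma space_pi: "space \<pi> = space M"
  using sets_eq_imp_space_eq[OF sets_pi] .

lemma meas_pi: "f \<in> borel_measurable M \<Longrightarrow> f \<in> borel_measurable \<pi>"
  using measurable_cong_sets[OF sets_pi refl] by blast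

lemma Stat:
  assumes f[measurable]: "f \<in> borel_measurable M"
  shows "(\<integral>\<^sup>+ x. \<integral>\<^sup>+ h. \<integral>\<^sup>+ y. f y \<partial>kc x h \<partial>\<tau> x \<partial>\<pi>) = (\<integral>\<^sup>+ x. f x \<partial>\<pi>)"
proof -
  have k: "\<kappa> \<in> \<pi> \<rightarrow>\<^sub>M subprob_algebra M"
    using measurable_prob_algebraD[OF kappa] measurable_cong_sets[OF sets_pi refl] by blast
  have "(\<integral>\<^sup>+ x. f x \<partial>\<pi>) = (\<integral>\<^sup>+ x. f x \<partial>(\<pi> \<bind> \<kappa>))" by (simp add: inv)
  also have "\<dots> = (\<integral>\<^sup>+ x. \<integral>\<^sup>+ y. f y \<partial>\<kappa> x \<partial>\<pi>)"
    by (rule nn_integral_bind[OF f k])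
  also have "\<dots> = (\<integral>\<^sup>+ x. \<integral>\<^sup>+ h. \<integral>\<^sup>+ y. f y \<partial>kc x h \<partial>\<tau> x \<partial>\<pi>)"
  proof (intro nn_integral_cong)
    fix x assume "x \<in> space \<pi>"
    then have x[measurable]: "x \<in> space M" by (simp add: space_pi)
    have "kc x \<in> borel \<rightarrow>\<^sub>M subprob_algebra M" by measurable
    then have kx: "kc x \<in> \<tau> x \<rightarrow>\<^sub>M subprob_algebra M"
      using measurable_cong_sets[OF sets_tau[OF x] refl] by blast
    show "(\<integral>\<^sup>+ y. f y \<partial>\<kappa> x) = (\<integral>\<^sup>+ h. \<integral>\<^sup>+ y. f y \<partial>kc x h \<partial>\<tau> x)"
      using kappa_eq x by (simp add: nn_integral_bind[OF f kx])
  qed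
  finally show ?thesis ..
qed

lemma QR:
  assumes t: "t \<ge> 0"
  shows "(\<integral>\<^sup>+ x. \<integral>\<^sup>+ h. Qf x h t \<partial>\<tau> x \<partial>\<pi>) = (\<integral>\<^sup>+ x. \<integral>\<^sup>+ h. Rs x h t \<partial>\<tau> x \<partial>\<pi>)"
proof -
  interpret P: prob_space \<pi> by (rule pi_prob)
  define a where "a = (\<integral>\<^sup>+ x. \<integral>\<^sup>+ h. Qf x h t \<partial>\<tau> x \<partial>\<pi>)"
  define b where "b = (\<integral>\<^sup>+ x. \<integral>\<^sup>+ h. Bf x h t \<partial>\<tau> x \<partial>\<pi>)"
  define r where "r = (\<integral>\<^sup>+ x. \<integral>\<^sup>+ h. Rs x h t \<partial>\<tau> x \<partial>\<pi>)"
  define c where "c = (\<integral>\<^sup>+ x. \<integral>\<^sup>+ h. C1 x h t \<partial>\<tau> x \<partial>\<pi>)"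
  have ab: "a + b = c"
  proof -
    have "a + b = (\<integral>\<^sup>+ x. (\<integral>\<^sup>+ h. Qf x h t \<partial>\<tau> x) + (\<integral>\<^sup>+ h. Bf x h t \<partial>\<tau> x) \<partial>\<pi>)"
      unfolding a_def b_def by (rule nn_integral_add[symmetric]) (intro meas_pi; measurable)+
    also have "\<dots> = c"
      unfolding c_def using pos by (intro nn_integral_cong L4x) (auto simp: space_pi)
    finally show ?thesis .
  qed
  have cZ: "c = (\<integral>\<^sup>+ x. \<integral>\<^sup>+ r. indicator {0..<t} r * Z x r \<partial>lborel \<partial>\<pi>)"
  proof -
    have "c = (\<integral>\<^sup>+ x. \<integral>\<^sup>+ h. \<integral>\<^sup>+ y. \<integral>\<^sup>+ r. indicator {0..<t} r * Z y r \<partial>lborel \<partial>kc x h \<partial>\<tau> x \<partial>\<pi>)"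
      unfolding c_def by (intro nn_integral_cong C1_eq) (simp add: space_pi)
    also have "\<dots> = (\<integral>\<^sup>+ x. \<integral>\<^sup>+ r. indicator {0..<t} r * Z x r \<partial>lborel \<partial>\<pi>)"
      by (rule Stat) measurable
    finally show ?thesis .
  qed
  have rb: "c = r + b"
  proof -
    have "c = (\<integral>\<^sup>+ x. (\<integral>\<^sup>+ h. Rs x h t \<partial>\<tau> x) + (\<integral>\<^sup>+ h. Bf x h t \<partial>\<tau> x) \<partial>\<pi>)"
      unfolding cZ using pos by (intro nn_integral_cong L3x) (auto simp: space_pi)
    also have "\<dots> = r + b"
      unfolding r_def b_def by (rule nn_integral_add) (intro meas_pi; measurable)+
    finally show ?thesis .
  qed
  have "c \<le> (\<integral>\<^sup>+ x. \<integral>\<^sup>+ r. indicator {0..<t} r \<partial>lborel \<partial>\<pi>)"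
    unfolding cZ
  proof (intro nn_integral_mono)
    fix x r assume "x \<in> space \<pi>"
    then have "Z x r \<le> 1" by (intro Z_le_1) (simp add: space_pi)
    then show "indicator {0..<t} r * Z x r \<le> (indicator {0..<t} r :: ennreal)"
      by (simp add: indicator_def)
  qed
  also have "\<dots> = ennreal t"
    using t P.emeasure_space_1 by simp
  finally have "c < \<infinity>" by (simp add: order_le_less_trans)
  then have "b \<noteq> \<infinity>" using ab by (auto simp: top_unique)
  then have "a = r" using ab rb by (simp add: add.commute ennreal_add_left_cancel)
  then show ?thesis unfolding a_def r_def .
qed

lemma EQ:
  assumes t: "t \<ge> 0"
  shows "(\<integral>\<^sup>+ x. \<integral>\<^sup>+ l. indicator {0..} l * (\<integral>\<^sup>+ h. indicator {l<..} h * Gf x l h t \<partial>\<tau> x) \<partial>lborel \<partial>\<pi>)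
    = (\<integral>\<^sup>+ x. \<integral>\<^sup>+ l. indicator {0..} l * (emeasure (\<tau> x) {l<..} * indicator A (x, l)) \<partial>lborel \<partial>\<pi>)"
proof -
  have "(\<integral>\<^sup>+ x. \<integral>\<^sup>+ l. indicator {0..} l * (\<integral>\<^sup>+ h. indicator {l<..} h * Gf x l h t \<partial>\<tau> x) \<partial>lborel \<partial>\<pi>)
     = (\<integral>\<^sup>+ x. (\<integral>\<^sup>+ h. P1 x h t \<partial>\<tau> x) + (\<integral>\<^sup>+ h. Qf x h t \<partial>\<tau> x) \<partial>\<pi>)"
  proof (intro nn_integral_cong)
    fix x assume "x \<in> space \<pi>"
    then have x[measurable]: "x \<in> space M" by (simp add: space_pi)
    show "(\<integral>\<^sup>+ l. indicator {0..} l * (\<integral>\<^sup>+ h. indicator {l<..} h * Gf x l h t \<partial>\<tau> x) \<partial>lborel)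
      = (\<integral>\<^sup>+ h. P1 x h t \<partial>\<tau> x) + (\<integral>\<^sup>+ h. Qf x h t \<partial>\<tau> x)"
      unfolding L5x[OF x t] by (rule nn_integral_add) (intro meas_tau[OF x]; measurable)+
  qed
  also have "\<dots> = (\<integral>\<^sup>+ x. \<integral>\<^sup>+ h. P1 x h t \<partial>\<tau> x \<partial>\<pi>) + (\<integral>\<^sup>+ x. \<integral>\<^sup>+ h. Qf x h t \<partial>\<tau> x \<partial>\<pi>)"
    by (rule nn_integral_add) (intro meas_pi; measurable)+
  also have "\<dots> = (\<integral>\<^sup>+ x. \<integral>\<^sup>+ h. Rs x h t \<partial>\<tau> x \<partial>\<pi>) + (\<integral>\<^sup>+ x. \<integral>\<^sup>+ h. P1 x h t \<partial>\<tau> x \<partial>\<pi>)"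
    by (simp add: QR[OF t] add.commute)
  also have "\<dots> = (\<integral>\<^sup>+ x. (\<integral>\<^sup>+ h. Rs x h t \<partial>\<tau> x) + (\<integral>\<^sup>+ h. P1 x h t \<partial>\<tau> x) \<partial>\<pi>)"
    by (rule nn_integral_add[symmetric]) (intro meas_pi; measurable)+
  also have "\<dots> = (\<integral>\<^sup>+ x. \<integral>\<^sup>+ l. indicator {0..} l * (emeasure (\<tau> x) {l<..} * indicator A (x, l)) \<partial>lborel \<partial>\<pi>)"
  proof (intro nn_integral_cong)
    fix x assume "x \<in> space \<pi>"
    then have x[measurable]: "x \<in> space M" by (simp add: space_pi)
    show "(\<integral>\<^sup>+ h. Rs x h t \<partial>\<tau> x) + (\<integral>\<^sup>+ h. P1 x h t \<partial>\<tau> x) = 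
      (\<integral>\<^sup>+ l. indicator {0..} l * (emeasure (\<tau> x) {l<..} * indicator A (x, l)) \<partial>lborel)"
      unfolding L6x[OF x t] by (rule nn_integral_add[symmetric]) (intro meas_tau[OF x]; measurable)+
  qed
  finally show ?thesis .
qed

end
theorem proposition1:
  fixes M :: "'a measure" and \<pi> :: "'a measure" and \<kappa> :: "'a \<Rightarrow> 'a measure"
    and kc :: "'a \<Rightarrow> real \<Rightarrow> 'a measure" and \<tau> :: "'a \<Rightarrow> real measure" and \<epsilon> :: real
  assumes "prob_space \<pi>" and "sets \<pi> = sets M"
    and "\<kappa> \<in> M \<rightarrow>\<^sub>M prob_algebra M"
    and "(\<lambda>(x, h). kc x h) \<in> M \<Otimes>\<^sub>M borel \<rightarrow>\<^sub>M prob_algebra M"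
    and "\<tau> \<in> M \<rightarrow>\<^sub>M prob_algebra borel"
    and "\<epsilon> > 0" and "\<forall>x\<in>space M. AE h in \<tau> x. h > \<epsilon>"
    and "\<exists>C. \<forall>x\<in>space M. integrable (\<tau> x) (\<lambda>h. h) \<and> (\<integral> h. h \<partial>\<tau> x) \<le> C"
    and "\<forall>x\<in>space M. \<kappa> x = \<tau> x \<bind> kc x"
    and "\<pi> \<bind> \<kappa> = \<pi>"
  shows "prob_space (anytime_dist \<pi> \<tau>) \<and>
    (\<forall>t\<ge>0. \<forall>A\<in>sets (M \<Otimes>\<^sub>M borel).
       (\<integral>\<^sup>+ xl. trans_XL \<tau> kc t (fst xl) (snd xl) A \<partial>anytime_dist \<pi> \<tau>)
         = emeasure (anytime_dist \<pi> \<tau>) A)"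
proof -
  obtain C where C: "\<forall>x\<in>space M. integrable (\<tau> x) (\<lambda>h. h) \<and> (\<integral> h. h \<partial>\<tau> x) \<le> C"
    using assms(8) by blast
  have pos: "\<forall>x\<in>space M. AE h in \<tau> x. h > 0"
  proof
    fix x assume "x \<in> space M"
    with assms(7) have "AE h in \<tau> x. h > \<epsilon>" by blast
    then show "AE h in \<tau> x. h > 0" by (rule AE_mp) (rule AE_I2, use assms(6) in auto)
  qed
  interpret P: prob_space \<pi> by fact
  have space_pi: "space \<pi> = space M" using sets_eq_imp_space_eq[OF assms(2)] .
  have meas_pi: "f \<in> borel_measurable M \<Longrightarrow> f \<in> borel_measurable \<pi>" for f :: "'a \<Rightarrow> ennreal"
    using measurable_cong_sets[OF assms(2) refl] by blast
  define E where "E = mean_hold_total \<pi> \<tau>"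
  interpret S0: setting M \<tau> kc "space (M \<Otimes>\<^sub>M borel)"
    by unfold_locales (simp_all add: assms)
  have mh_ge: "\<epsilon> \<le> mean_hold \<tau> x" if x: "x \<in> space M" for x
  proof -
    interpret T: prob_space "\<tau> x" by (rule S0.tau_prob[OF x])
    have "\<epsilon> = (\<integral>h. \<epsilon> \<partial>\<tau> x)" by (simp add: T.prob_space)
    also have "\<dots> \<le> (\<integral>h. h \<partial>\<tau> x)"
      using C x assms(7) by (intro integral_mono_AE) (auto elim!: AE_mp)
    finally show ?thesis unfolding mean_hold_def .
  qed
  have mh_le: "mean_hold \<tau> x \<le> C" if x: "x \<in> space M" for x
    using C x unfolding mean_hold_def by blast
  have mh_enn: "ennreal (mean_hold \<tau> x) = (\<integral>\<^sup>+h. ennreal h \<partial>\<tau> x)" if x: "x \<in> space M" for x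
    unfolding mean_hold_def using C x pos
    by (intro nn_integral_eq_integral[symmetric]) (auto elim!: AE_mp)
  have mh_meas: "mean_hold \<tau> \<in> borel_measurable M"
  proof -
    have "(\<lambda>x. enn2real (\<integral>\<^sup>+h. ennreal h \<partial>\<tau> x)) \<in> borel_measurable M" by measurable
    moreover have "x \<in> space M \<Longrightarrow> enn2real (\<integral>\<^sup>+h. ennreal h \<partial>\<tau> x) = mean_hold \<tau> x" for x
      using mh_enn[of x, symmetric] mh_ge[of x] assms(6) by simp
    ultimately show ?thesis by (rule measurable_cong[THEN iffD1, rotated])
  qed
  have int: "integrable \<pi> (mean_hold \<tau>)"
  proof (rule P.integrable_const_bound[where B=C])
    show "AE x in \<pi>. norm (mean_hold \<tau> x) \<le> C"
    proof (intro AE_I2)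
      fix x assume "x \<in> space \<pi>"
      then have "\<epsilon> \<le> mean_hold \<tau> x" "mean_hold \<tau> x \<le> C" using mh_ge mh_le by (auto simp: space_pi)
      then show "norm (mean_hold \<tau> x) \<le> C" using assms(6) by simp
    qed
    show "mean_hold \<tau> \<in> borel_measurable \<pi>"
      using mh_meas measurable_cong_sets[OF assms(2) refl] by blast
  qed
  have E_ge: "\<epsilon> \<le> E"
  proof -
    have "\<epsilon> = (\<integral>x. \<epsilon> \<partial>\<pi>)" by (simp add: P.prob_space)
    also have "\<dots> \<le> E"
      unfolding E_def mean_hold_total_def using int mh_ge
      by (intro integral_mono_AE) (auto simp: space_pi intro!: AE_I2)
    finally show ?thesis .
  qed
  have E_pos: "E > 0" using E_ge assms(6) by simp
  have E_enn: "(\<integral>\<^sup>+x. ennreal (mean_hold \<tau> x) \<partial>\<pi>) = ennreal E"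
    unfolding E_def mean_hold_total_def using int mh_ge assms(6)
    by (intro nn_integral_eq_integral) (auto simp: space_pi intro!: AE_I2 order_trans[OF _ mh_ge])
  have mh_Fb: "(\<integral>\<^sup>+ l. indicator {0..} l * emeasure (\<tau> x) {l<..} \<partial>lborel) = ennreal (mean_hold \<tau> x)"
    if x[measurable]: "x \<in> space M" for x
  proof -
    have "(\<integral>\<^sup>+ l. indicator {0..} l * emeasure (\<tau> x) {l<..} \<partial>lborel) =
      (\<integral>\<^sup>+ l. indicator {0..} l * (emeasure (\<tau> x) {l<..} * indicator (space (M \<Otimes>\<^sub>M borel)) (x, l)) \<partial>lborel)"
      using x by (intro nn_integral_cong) (simp add: space_pair_measure)
    also have "\<dots> = (\<integral>\<^sup>+ h. \<integral>\<^sup>+ l. indicator {0..} l * indicator {l<..} h * indicator (space (M \<Otimes>\<^sub>M borel)) (x, l) \<partial>lborel \<partial>\<tau> x)"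
      by (rule S0.Rs_x[OF x]) simp
    also have "\<dots> = (\<integral>\<^sup>+ h. ennreal h \<partial>\<tau> x)"
    proof (rule nn_integral_cong_AE)
      have eq: "(\<integral>\<^sup>+ l. indicator {0..} l * indicator {l<..} h * indicator (space (M \<Otimes>\<^sub>M borel)) (x, l) \<partial>lborel) = ennreal h"
        if h: "0 < h" for h :: real
      proof -
        have "(\<integral>\<^sup>+ l. indicator {0..} l * indicator {l<..} h * indicator (space (M \<Otimes>\<^sub>M borel)) (x, l) \<partial>lborel)
           = (\<integral>\<^sup>+ l. indicator {0..<h} l \<partial>lborel)"
          using x by (intro nn_integral_cong) (auto simp: space_pair_measure indicator_def)
        also have "\<dots> = ennreal h" using h by simp
        finally show ?thesis .
      qed
      show "AE h in \<tau> x. (\<integral>\<^sup>+ l. indicator {0..} l * indicator {l<..} h * indicator (space (M \<Otimes>\<^sub>M borel)) (x, l) \<partial>lborel) = ennreal h"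
        by (rule AE_mp[OF pos[rule_format, OF x]], rule AE_I2) (simp add: eq)
    qed
    also have "\<dots> = ennreal (mean_hold \<tau> x)" using mh_enn[OF x] by simp
    finally show ?thesis .
  qed
  define cE where "cE = ennreal (1 / E)"
  have sets_pl: "sets (\<pi> \<Otimes>\<^sub>M lborel) = sets (M \<Otimes>\<^sub>M borel)"
    by (intro sets_pair_measure_cong assms(2)) simp
  have space_pl: "space (\<pi> \<Otimes>\<^sub>M lborel) = space M \<times> UNIV"
    by (simp add: space_pair_measure space_pi)
  have meas_pl: "f \<in> borel_measurable (M \<Otimes>\<^sub>M borel) \<Longrightarrow> f \<in> borel_measurable (\<pi> \<Otimes>\<^sub>M lborel)" for f :: "_ \<Rightarrow> ennreal"
    using measurable_cong_sets[OF sets_pl refl] by blast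
  have dens_eq: "ennreal (indicator {0..} l * measure (\<tau> x) {l<..} / E) = cE * (indicator {0..} l * emeasure (\<tau> x) {l<..})"
    if x: "x \<in> space M" for x l
  proof -
    interpret T: prob_space "\<tau> x" by (rule S0.tau_prob[OF x])
    show ?thesis
      using E_pos unfolding cE_def T.emeasure_eq_measure
      by (cases "l \<ge> 0") (auto simp: ennreal_mult[symmetric] indicator_def)
  qed
  let ?d = "\<lambda>(x, l). ennreal (indicator {0..} l * measure (\<tau> x) {l<..} / mean_hold_total \<pi> \<tau>)"
  have dens_meas: "?d \<in> borel_measurable (\<pi> \<Otimes>\<^sub>M lborel)"
  proof -
    have "(\<lambda>p. cE * (indicator {0..} (snd p) * emeasure (\<tau> (fst p)) {snd p<..})) \<in> borel_measurable (M \<Otimes>\<^sub>M borel)"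
      by measurable
    then have "(\<lambda>p. cE * (indicator {0..} (snd p) * emeasure (\<tau> (fst p)) {snd p<..})) \<in> borel_measurable (\<pi> \<Otimes>\<^sub>M lborel)"
      by (rule meas_pl)
    moreover have "p \<in> space (\<pi> \<Otimes>\<^sub>M lborel) \<Longrightarrow> cE * (indicator {0..} (snd p) * emeasure (\<tau> (fst p)) {snd p<..}) = ?d p" for p
      using dens_eq by (auto simp: space_pl E_def)
    ultimately show ?thesis by (rule measurable_cong[THEN iffD1, rotated])
  qed
  have int_d: "(\<integral>\<^sup>+ p. ?d p * f p \<partial>(\<pi> \<Otimes>\<^sub>M lborel)) =
      cE * (\<integral>\<^sup>+ x. \<integral>\<^sup>+ l. indicator {0..} l * emeasure (\<tau> x) {l<..} * f (x, l) \<partial>lborel \<partial>\<pi>)"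
    if f[measurable]: "f \<in> borel_measurable (M \<Otimes>\<^sub>M borel)" for f
  proof -
    have "(\<integral>\<^sup>+ p. ?d p * f p \<partial>(\<pi> \<Otimes>\<^sub>M lborel)) = (\<integral>\<^sup>+ x. \<integral>\<^sup>+ l. ?d (x, l) * f (x, l) \<partial>lborel \<partial>\<pi>)"
      by (intro lborel.nn_integral_fst[symmetric] borel_measurable_times_ennreal dens_meas meas_pl f)
    also have "\<dots> = (\<integral>\<^sup>+ x. \<integral>\<^sup>+ l. cE * (indicator {0..} l * emeasure (\<tau> x) {l<..} * f (x, l)) \<partial>lborel \<partial>\<pi>)"
      by (intro nn_integral_cong) (auto simp: dens_eq[unfolded E_def] space_pi mult.assoc)
    also have "\<dots> = cE * (\<integral>\<^sup>+ x. \<integral>\<^sup>+ l. indicator {0..} l * emeasure (\<tau> x) {l<..} * f (x, l) \<partial>lborel \<partial>\<pi>)"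
    proof -
      have "(\<integral>\<^sup>+ x. \<integral>\<^sup>+ l. cE * (indicator {0..} l * emeasure (\<tau> x) {l<..} * f (x, l)) \<partial>lborel \<partial>\<pi>)
         = (\<integral>\<^sup>+ x. cE * \<integral>\<^sup>+ l. indicator {0..} l * emeasure (\<tau> x) {l<..} * f (x, l) \<partial>lborel \<partial>\<pi>)"
      proof (intro nn_integral_cong)
        fix x assume "x \<in> space \<pi>"
        then have x[measurable]: "x \<in> space M" by (simp add: space_pi)
        show "(\<integral>\<^sup>+ l. cE * (indicator {0..} l * emeasure (\<tau> x) {l<..} * f (x, l)) \<partial>lborel) =
          cE * \<integral>\<^sup>+ l. indicator {0..} l * emeasure (\<tau> x) {l<..} * f (x, l) \<partial>lborel"
          by (rule nn_integral_cmult) simp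
      qed
      also have "\<dots> = cE * (\<integral>\<^sup>+ x. \<integral>\<^sup>+ l. indicator {0..} l * emeasure (\<tau> x) {l<..} * f (x, l) \<partial>lborel \<partial>\<pi>)"
        by (rule nn_integral_cmult) (intro meas_pi; measurable)
      finally show ?thesis .
    qed
    finally show ?thesis .
  qed
  have part1: "prob_space (anytime_dist \<pi> \<tau>)"
  proof
    have "emeasure (anytime_dist \<pi> \<tau>) (space (anytime_dist \<pi> \<tau>)) =
       emeasure (density (\<pi> \<Otimes>\<^sub>M lborel) ?d) (space (\<pi> \<Otimes>\<^sub>M lborel))"
      by (simp add: anytime_dist_def)
    also have "\<dots> = (\<integral>\<^sup>+ p. ?d p * indicator (space (\<pi> \<Otimes>\<^sub>M lborel)) p \<partial>(\<pi> \<Otimes>\<^sub>M lborel))"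
      by (rule emeasure_density[OF dens_meas sets.top])
    also have "\<dots> = (\<integral>\<^sup>+ p. ?d p * 1 \<partial>(\<pi> \<Otimes>\<^sub>M lborel))"
      by (intro nn_integral_cong) simp
    also have "\<dots> = cE * (\<integral>\<^sup>+ x. \<integral>\<^sup>+ l. indicator {0..} l * emeasure (\<tau> x) {l<..} * 1 \<partial>lborel \<partial>\<pi>)"
      by (rule int_d) simp
    also have "\<dots> = cE * (\<integral>\<^sup>+ x. ennreal (mean_hold \<tau> x) \<partial>\<pi>)"
      by (simp, intro arg_cong2[where f="(*)"] refl nn_integral_cong) (simp add: mh_Fb space_pi)
    also have "\<dots> = 1"
      using E_pos by (simp add: E_enn cE_def ennreal_mult[symmetric])
    finally show "emeasure (anytime_dist \<pi> \<tau>) (space (anytime_dist \<pi> \<tau>)) = 1" .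
  qed
  have part2: "(\<integral>\<^sup>+ xl. trans_XL \<tau> kc t (fst xl) (snd xl) A \<partial>anytime_dist \<pi> \<tau>) = emeasure (anytime_dist \<pi> \<tau>) A"
    if t: "t \<ge> 0" and A: "A \<in> sets (M \<Otimes>\<^sub>M borel)" for t A
  proof -
    interpret S: stat M \<tau> kc A \<pi> \<kappa>
      by unfold_locales (use assms A pos in auto)
    have trans_meas: "(\<lambda>xl. trans_XL \<tau> kc t (fst xl) (snd xl) A) \<in> borel_measurable (M \<Otimes>\<^sub>M borel)"
      unfolding trans_XL_def by measurable
    have pw: "indicator {0..} l * emeasure (\<tau> x) {l<..} * trans_XL \<tau> kc t x l A =
       indicator {0..} l * (\<integral>\<^sup>+ h. indicator {l<..} h * S.Gf x l h t \<partial>\<tau> x)" if x[measurable]: "x \<in> space M" for x l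
    proof -
      interpret T: prob_space "\<tau> x" by (rule S0.tau_prob[OF x])
      let ?N = "\<integral>\<^sup>+ h. indicator {l<..} h * S.Gf x l h t \<partial>\<tau> x"
      have tr: "trans_XL \<tau> kc t x l A = ?N / emeasure (\<tau> x) {l<..}"
        unfolding trans_XL_def ..
      show ?thesis
      proof (cases "emeasure (\<tau> x) {l<..} = 0")
        case True
        have "?N \<le> (\<integral>\<^sup>+ h. \<infinity> * indicator {l<..} h \<partial>\<tau> x)"
          by (intro nn_integral_mono) (simp add: indicator_def)
        also have "\<dots> = 0"
          using True by (subst nn_integral_cmult) (auto simp: S0.Fb_int[OF x, symmetric] intro!: S0.meas_tau[OF x])
        finally have "?N = 0" by simp
        then show ?thesis using True tr by simp
      next
        case False
        have ninf: "emeasure (\<tau> x) {l<..} \<noteq> \<infinity>" by (simp add: T.emeasure_eq_measure)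
        have "emeasure (\<tau> x) {l<..} * trans_XL \<tau> kc t x l A = ?N * emeasure (\<tau> x) {l<..} / emeasure (\<tau> x) {l<..}"
          unfolding tr by (simp add: ennreal_times_divide mult.commute)
        also have "\<dots> = ?N" by (rule ennreal_mult_divide_eq[OF False ninf[unfolded infinity_ennreal_def]])
        finally have "emeasure (\<tau> x) {l<..} * trans_XL \<tau> kc t x l A = ?N" .
        then show ?thesis by (simp add: mult.assoc)
      qed
    qed
    have "(\<integral>\<^sup>+ xl. trans_XL \<tau> kc t (fst xl) (snd xl) A \<partial>anytime_dist \<pi> \<tau>) =
        (\<integral>\<^sup>+ p. ?d p * trans_XL \<tau> kc t (fst p) (snd p) A \<partial>(\<pi> \<Otimes>\<^sub>M lborel))"
      unfolding anytime_dist_def by (rule nn_integral_density[OF dens_meas meas_pl[OF trans_meas]])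
    also have "\<dots> = cE * (\<integral>\<^sup>+ x. \<integral>\<^sup>+ l. indicator {0..} l * emeasure (\<tau> x) {l<..} * trans_XL \<tau> kc t x l A \<partial>lborel \<partial>\<pi>)"
      using int_d[OF trans_meas] by simp
    also have "\<dots> = cE * (\<integral>\<^sup>+ x. \<integral>\<^sup>+ l. indicator {0..} l * (\<integral>\<^sup>+ h. indicator {l<..} h * S.Gf x l h t \<partial>\<tau> x) \<partial>lborel \<partial>\<pi>)"
      by (rule arg_cong2[where f="(*)"], rule refl, intro nn_integral_cong, rule pw) (simp add: space_pi)
    also have "\<dots> = cE * (\<integral>\<^sup>+ x. \<integral>\<^sup>+ l. indicator {0..} l * (emeasure (\<tau> x) {l<..} * indicator A (x, l)) \<partial>lborel \<partial>\<pi>)"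
      by (rule arg_cong2[where f="(*)"], rule refl, rule S.EQ[OF t])
    also have "\<dots> = cE * (\<integral>\<^sup>+ x. \<integral>\<^sup>+ l. indicator {0..} l * emeasure (\<tau> x) {l<..} * indicator A (x, l) \<partial>lborel \<partial>\<pi>)"
      by (rule arg_cong2[where f="(*)"], rule refl, intro nn_integral_cong) (simp only: mult.assoc)
    also have "\<dots> = (\<integral>\<^sup>+ p. ?d p * indicator A p \<partial>(\<pi> \<Otimes>\<^sub>M lborel))"
      by (rule int_d[symmetric]) (rule borel_measurable_indicator[OF A])
    also have "\<dots> = emeasure (anytime_dist \<pi> \<tau>) A"
      unfolding anytime_dist_def
      by (rule emeasure_density[OF dens_meas, symmetric]) (use A sets_pl in blast)
    finally show ?thesis .
  qed
  show ?thesis using part1 part2 by blast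
qed

end
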